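(* Let $A\subseteq\mathbb Z$ and $Q$ be non-empty finite sets, $Q$ a set of primes, let $n=\prod_{q\in Q}q$ and $d$ a positive integer. Let $m:\mathbb Z_{>0}\to\mathbb R_{>0}$ be a multiplicative function with $m(q)\le q-1$ for all $q\in Q$, and let $\sigma:\mathbb N\to\mathbb R$. Let $(A_r)_{r\in\mathcal D(n)}$ be a family of subsets of $A$ such that (independence) $A_{rs}=A_r\cap A_s$ for all coprime $r,s\in\mathcal D(n)$, and $A_1=A$; (density) $|A_r|=|A|\cdot\frac{m(r)}{r}+\sigma(r)$ for all $r\in\mathcal D(n)$. Assume $|\sigma(r)|\le m(r)$ for every $r\in\mathcal D(n)$ and $m(q)\le d$ for every $q\in Q$. Then $$\tfrac12|A|\,W_m(Q)-B(Q,d)\;\le\;\Big|A\setminus\bigcup_{q\in Q}A_q\Big|\;\le\;\tfrac32|A|\,W_m(Q)+B(Q,d),$$ where $W_m(Q)=\prod_{q\in Q}\big(1-\frac{m(q)}{q}\big)$ and $B(Q,d)=(d\cdot|Q|)^{4(d+1)^2(2+\ln\ln(|Q|+1))+2}$.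
   Context: $\mathcal D(n)$ is the set of positive divisors of $n$. A function $m:\mathbb Z_{>0}\to\mathbb R_{>0}$ is multiplicative if $m(ab)=m(a)m(b)$ for all coprime positive integers $a,b$ (so $m(1)=1$). *)

theory Defs
  imports "HOL-Analysis.Analysis" "HOL-Computational_Algebra.Primes"
begin

definition multiplicative_pos :: "(nat \<Rightarrow> real) \<Rightarrow> bool" where
  "multiplicative_pos m \<longleftrightarrow> m 1 = 1 \<and> (\<forall>a>0. m a > 0) \<and>
     (\<forall>a b. a > 0 \<longrightarrow> b > 0 \<longrightarrow> coprime a b \<longrightarrow> m (a * b) = m a * m b)"

definition divisors_set :: "nat \<Rightarrow> nat set" where
  "divisors_set n = {r. 0 < r \<and> r dvd n}"

definition W_m :: "(nat \<Rightarrow> real) \<Rightarrow> nat set \<Rightarrow> real" where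
  "W_m m Q = (\<Prod>q\<in>Q. 1 - m q / real q)"

definition B_bound :: "nat set \<Rightarrow> nat \<Rightarrow> real" where
  "B_bound Q d = (real d * real (card Q)) powr
      (4 * (real d + 1)^2 * (2 + ln (ln (real (card Q) + 1))) + 2)"

end

theory Submission
  imports Defs
begin

lemma primes_prod_dvd:
  fixes N :: nat
  assumes "finite P" "\<And>p. p \<in> P \<Longrightarrow> prime p" "\<And>p. p \<in> P \<Longrightarrow> p dvd N"
  shows "(\<Prod>P) dvd N"
  using assms
proof (induction P rule: finite_induct)
  case empty then show ?case by simp
next
  case (insert p F)
  have "\<not> p dvd \<Prod>F"
  proof
    assume "p dvd \<Prod>F"
    then obtain x where "x \<in> F" "p dvd x"
      using prime_dvd_prod_iff[of F p "\<lambda>x. x"] insert by auto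
    then have "p = x" using insert by (metis insertCI primes_dvd_imp_eq)
    with insert \<open>x\<in>F\<close> show False by simp
  qed
  then have "coprime p (\<Prod>F)" using insert prime_imp_coprime by (metis insertI1)
  then show ?case using insert by (simp add: divides_mult)
qed

lemma block_count:
  fixes j :: nat
  shows "j * card {p::nat. prime p \<and> 2^j < p \<and> p \<le> 2^(j+1)} \<le> 2^(j+1)"
proof -
  define m :: nat where "m = 2^j"
  define P where "P = {p. prime p \<and> m < p \<and> p \<le> 2*m}"
  have fin: "finite P" unfolding P_def by simp
  have m0: "m > 0" unfolding m_def by simp
  have dv: "p dvd (2*m choose m)" if "p \<in> P" for p
  proof -
    have pr: "prime p" "m < p" "p \<le> 2*m" using that unfolding P_def by auto
    have "p dvd fact (2*m)" using pr by (simp add: prime_dvd_fact_iff)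
    moreover have "fact m * fact (2*m - m) * (2*m choose m) = (fact (2*m) :: nat)"
      by (rule binomial_fact_lemma) simp
    ultimately have "p dvd fact m * fact m * (2*m choose m)" by simp
    moreover have "\<not> p dvd fact m" using pr by (simp add: prime_dvd_fact_iff)
    ultimately show ?thesis using pr(1) by (metis prime_dvd_mult_iff)
  qed
  have "\<Prod>P dvd (2*m choose m)"
    by (rule primes_prod_dvd[OF fin]) (auto simp: P_def dv)
  moreover have "(2*m choose m) > 0" by simp
  ultimately have "\<Prod>P \<le> (2*m choose m)" by (simp add: dvd_imp_le)
  also have "\<dots> \<le> 2^(2*m)" by (rule binomial_le_pow2)
  finally have a: "\<Prod>P \<le> 2^(2*m)" .
  have "(\<Prod>p\<in>P. m) \<le> (\<Prod>p\<in>P. p)"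
    by (rule prod_mono) (auto simp: P_def)
  then have "m ^ card P \<le> 2^(2*m)" using a by simp
  then have "2^(j * card P) \<le> (2::nat)^(2*m)" unfolding m_def by (simp add: power_mult)
  then have "j * card P \<le> 2*m" by simp
  then show ?thesis unfolding P_def m_def by simp
qed

lemma block_sum:
  fixes j :: nat assumes "j \<ge> 1"
  shows "(\<Sum>p\<in>{p::nat. prime p \<and> 2^j < p \<and> p \<le> 2^(j+1)}. 1 / real p) \<le> 2 / real j"
proof -
  define P where "P = {p::nat. prime p \<and> 2^j < p \<and> p \<le> 2^(j+1)}"
  have "(\<Sum>p\<in>P. 1 / real p) \<le> real (card P) * (1 / 2^j)"
  proof (rule sum_bounded_above)
    fix p assume "p \<in> P"
    then have "real p \<ge> 2^j" unfolding P_def by (simp add: of_nat_le_iff[symmetric])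
    moreover have "(0::real) < 2^j" by simp
    ultimately show "1 / real p \<le> 1 / 2^j" by (simp add: frac_le)
  qed
  moreover have "real j * real (card P) \<le> 2^(j+1)"
    using block_count[of j] unfolding P_def by (metis of_nat_le_iff of_nat_mult of_nat_numeral of_nat_power)
  ultimately have a: "2^j * (\<Sum>p\<in>P. 1 / real p) \<le> real (card P)" "real j * real (card P) \<le> 2 * 2^j"
    by (simp_all add: field_simps)
  have b: "real j * (2^j * (\<Sum>p\<in>P. 1 / real p)) \<le> real j * real (card P)"
    using mult_left_mono[OF a(1), of "real j"] by simp
  have "real j * (2^j * (\<Sum>p\<in>P. 1 / real p)) = 2^j * (real j * (\<Sum>p\<in>P. 1 / real p))"
    by (simp add: ac_simps)
  then have "2^j * (real j * (\<Sum>p\<in>P. 1 / real p)) \<le> 2^j * 2"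
    using b a(2) by linarith
  then have "real j * (\<Sum>p\<in>P. 1 / real p) \<le> 2" by simp
  then show ?thesis using assms unfolding P_def[symmetric]
    by (simp add: field_simps)
qed

lemma prime_sum_pow2:
  fixes J :: nat assumes "J \<ge> 1"
  shows "(\<Sum>p\<in>{p::nat. prime p \<and> p \<le> 2^J}. 1 / real p) \<le> 1/2 + 2 * (\<Sum>j\<in>{1..<J}. 1 / real j)"
  using assms
proof (induction J rule: dec_induct)
  case base
  have "{p::nat. prime p \<and> p \<le> 2^1} = {2}"
  proof
    show "{p::nat. prime p \<and> p \<le> 2^1} \<subseteq> {2}"
    proof
      fix p :: nat assume "p \<in> {p::nat. prime p \<and> p \<le> 2^1}"
      then have "prime p" "p \<le> 2" by auto
      moreover from \<open>prime p\<close> have "p \<ge> 2" by (rule prime_ge_2_nat)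
      ultimately show "p \<in> {2}" by simp
    qed
    show "{2} \<subseteq> {p::nat. prime p \<and> p \<le> 2^1}" by simp
  qed
  then show ?case by simp
next
  case (step J)
  have eq: "{p::nat. prime p \<and> p \<le> 2^Suc J} = {p::nat. prime p \<and> p \<le> 2^J} \<union> {p::nat. prime p \<and> 2^J < p \<and> p \<le> 2^(J+1)}"
    by auto
  have "(\<Sum>p\<in>{p::nat. prime p \<and> p \<le> 2^Suc J}. 1 / real p)
      = (\<Sum>p\<in>{p::nat. prime p \<and> p \<le> 2^J}. 1 / real p) + (\<Sum>p\<in>{p::nat. prime p \<and> 2^J < p \<and> p \<le> 2^(J+1)}. 1 / real p)"
    unfolding eq by (rule sum.union_disjoint) auto
  also have "\<dots> \<le> 1/2 + 2 * (\<Sum>j\<in>{1..<J}. 1 / real j) + 2 / real J"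
    using step block_sum[of J] by simp
  also have "\<dots> = 1/2 + 2 * (\<Sum>j\<in>{1..<Suc J}. 1 / real j)"
    using step by (simp add: algebra_simps)
  finally show ?case .
qed

lemma harm_bound:
  fixes J :: nat assumes "J \<ge> 1"
  shows "(\<Sum>j\<in>{1..<Suc J}. 1 / real j) \<le> 1 + ln (real J)"
  using assms
proof (induction J rule: dec_induct)
  case base then show ?case by simp
next
  case (step J)
  have J0: "real J > 0" using step by simp
  have "ln (real J / real (Suc J)) \<le> real J / real (Suc J) - 1"
    by (rule ln_le_minus_one) (use J0 in simp)
  also have "\<dots> = - 1 / real (Suc J)" by (simp add: field_simps)
  finally have "1 / real (Suc J) \<le> ln (real (Suc J)) - ln (real J)"
    using J0 by (simp add: ln_div)
  then show ?case using step by simp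
qed

lemma ln2_ge: "ln (2::real) \<ge> 2/3"
proof -
  have "exp (2/3::real) ^ 3 = exp (real 3 * (2/3))" by (simp only: exp_of_nat_mult)
  also have "\<dots> = exp 1 ^ 2" by (simp add: exp_of_nat_mult[symmetric])
  also have "\<dots> \<le> (272/100)^2" using e_less_272 by (intro power_mono) auto
  also have "\<dots> \<le> 2^3" by (simp add: power2_eq_square)
  finally have "exp (2/3::real) \<le> 2" by (subst (asm) power_mono_iff) auto
  then have "ln (exp (2/3::real)) \<le> ln 2" by (subst ln_le_cancel_iff) auto
  then show ?thesis by simp
qed

lemma ln3_ge: "ln (3::real) \<ge> 1"
proof -
  have "ln (exp (1::real)) \<le> ln 3" using exp_le by (subst ln_le_cancel_iff) auto
  then show ?thesis by simp
qed

lemma recip_sum_bound: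
  fixes Q :: "nat set"
  assumes "finite Q" "\<forall>q\<in>Q. prime q" "card Q \<ge> 2"
  shows "(\<Sum>q\<in>Q. 1 / real q) \<le> 2 * ln (ln (real (card Q) + 1)) + 9/2"
proof -
  define k where "k = card Q"
  define J where "J = (LEAST J. k \<le> 2^J)"
  have ex: "k \<le> 2^k" unfolding k_def by (rule less_imp_le) (rule less_exp)
  have kJ: "k \<le> 2^J" unfolding J_def by (rule LeastI[of _ k]) (rule ex)
  have J1: "J \<ge> 1"
  proof (rule ccontr)
    assume "\<not> J \<ge> 1" then have "J = 0" by simp
    then show False using kJ assms(3) unfolding k_def by simp
  qed
  have Jm: "2^(J-1) < k"
  proof (rule ccontr)
    assume "\<not> 2^(J-1) < k"
    then have "J \<le> J - 1" unfolding J_def by (intro Least_le) simp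
    with J1 show False by simp
  qed
  have k2: "k \<ge> 2" using assms unfolding k_def by simp
  have l0: "ln (ln (real k + 1)) \<ge> 0"
  proof -
    have "ln (real k + 1) \<ge> ln 3" using k2 by (subst ln_le_cancel_iff) auto
    then have "ln (real k + 1) \<ge> 1" using ln3_ge by linarith
    then show ?thesis by simp
  qed
  have split: "(\<Sum>q\<in>Q. 1 / real q) = (\<Sum>q\<in>Q \<inter> {..2^J}. 1 / real q) + (\<Sum>q\<in>Q - {..2^J}. 1 / real q)"
    using assms(1) by (metis sum.Int_Diff)
  have s1: "(\<Sum>q\<in>Q \<inter> {..2^J}. 1 / real q) \<le> (\<Sum>p\<in>{p::nat. prime p \<and> p \<le> 2^J}. 1 / real p)"
    by (rule sum_mono2) (use assms in auto)
  have s2: "(\<Sum>q\<in>Q - {..2^J}. 1 / real q) \<le> 1"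
  proof -
    have "(\<Sum>q\<in>Q - {..2^J}. 1 / real q) \<le> real (card (Q - {..2^J})) * (1 / 2^J)"
    proof (rule sum_bounded_above)
      fix q assume "q \<in> Q - {..2^J}"
      then have "real q \<ge> 2^J" by (simp add: of_nat_le_iff[symmetric])
      then show "1 / real q \<le> 1 / 2^J" by (simp add: frac_le)
    qed
    also have "\<dots> \<le> real k * (1 / 2^J)"
      unfolding k_def using assms(1) by (intro mult_right_mono) (auto intro: card_mono)
    also have "\<dots> \<le> 1" using kJ by (simp add: field_simps)
    finally show ?thesis .
  qed
  show ?thesis
  proof (cases "J = 1")
    case True
    then show ?thesis using split s1 s2 prime_sum_pow2[of 1] l0 unfolding k_def by simp
  next
    case False
    then have J2: "J \<ge> 2" using J1 by simp
    have h: "(\<Sum>j\<in>{1..<J}. 1 / real j) \<le> 1 + ln (real (J - 1))"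
      using harm_bound[of "J-1"] J2 by (simp add: Suc_diff_1)
    have "real (2^(J-1)) < real k" using Jm by (simp only: of_nat_less_iff)
    then have "ln (2^(J-1)) < ln (real k)" by simp
    then have "real (J-1) * ln 2 < ln (real k)" by (simp add: ln_realpow)
    moreover have "real (J-1) * (2/3) \<le> real (J-1) * ln 2"
      using ln2_ge by (intro mult_left_mono) auto
    ultimately have "real (J-1) < (3/2) * ln (real k)" by linarith
    then have "ln (real (J-1)) \<le> ln ((3/2) * ln (real k))" using J2 by (intro ln_mono) auto
    also have "\<dots> = ln (3/2) + ln (ln (real k))"
      using k2 by (subst ln_mult) auto
    also have "\<dots> \<le> 1/2 + ln (ln (real k + 1))"
    proof -
      have "ln (3/2::real) \<le> 3/2 - 1" by (rule ln_le_minus_one) simp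
      moreover have "ln (ln (real k)) \<le> ln (ln (real k + 1))" using k2 by simp
      ultimately show ?thesis by simp
    qed
    finally have "ln (real (J-1)) \<le> 1/2 + ln (ln (real k + 1))" .
    then show ?thesis using split s1 s2 prime_sum_pow2[of J] J1 h unfolding k_def by simp
  qed
qed



definition wK :: "nat set \<Rightarrow> nat \<Rightarrow> nat set \<Rightarrow> real" where
  "wK Q2 K T = (if card (T \<inter> Q2) \<le> K then (-1)^card T else 0)"

definition FK :: "nat set \<Rightarrow> nat \<Rightarrow> nat set \<Rightarrow> real" where
  "FK Q2 K U = (\<Sum>T\<in>Pow U. wK Q2 K T)"

lemma alt_partial:
  "(\<Sum>i\<le>K. (-1)^i * real (j choose i)) = (if j = 0 then 1 else (-1)^K * real ((j - 1) choose K))"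
proof (induction K)
  case 0 then show ?case by simp
next
  case (Suc K)
  show ?case
  proof (cases j)
    case 0 then show ?thesis using Suc by simp
  next
    case (Suc j')
    have "(\<Sum>i\<le>Suc K. (-1)^i * real (j choose i)) = (-1)^K * real (j' choose K) + (-1)^Suc K * real (Suc j' choose Suc K)"
      using Suc.IH Suc by simp
    also have "\<dots> = (-1)^Suc K * real (j' choose Suc K)"
      by (simp add: binomial_Suc_Suc algebra_simps)
    finally show ?thesis using Suc by simp
  qed
qed

lemma card_subsets_sum:
  assumes "finite U"
  shows "(\<Sum>T\<in>Pow U. (if card T \<le> K then (-1)^card T else 0)) = (\<Sum>i\<le>K. (-1)^i * real (card U choose i))"
proof -
  let ?f = "\<lambda>i. (if i \<le> K then (-1)^i else 0) :: real"
  have "(\<Sum>T\<in>Pow U. ?f (card T)) = (\<Sum>i\<in>{..card U}. \<Sum>T\<in>{T. T \<in> Pow U \<and> card T = i}. ?f (card T))"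
    by (rule sum.group[symmetric]) (use assms in \<open>auto intro: card_mono\<close>)
  also have "\<dots> = (\<Sum>i\<in>{..card U}. real (card U choose i) * ?f i)"
  proof (rule sum.cong[OF refl])
    fix i
    have "{T. T \<in> Pow U \<and> card T = i} = {T. T \<subseteq> U \<and> card T = i}" by auto
    then show "(\<Sum>T\<in>{T. T \<in> Pow U \<and> card T = i}. ?f (card T)) = real (card U choose i) * ?f i"
      using n_subsets[OF assms, of i] by simp
  qed
  also have "\<dots> = (\<Sum>i\<in>{..card U} \<inter> {..K}. real (card U choose i) * (-1)^i)"
    by (subst sum.inter_restrict) (auto intro!: sum.cong)
  also have "\<dots> = (\<Sum>i\<in>{..K}. real (card U choose i) * (-1)^i)"
    by (rule sum.mono_neutral_left) auto
  finally show ?thesis by (simp add: mult.commute)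
qed

lemma FK_insert_nonQ2:
  assumes "finite U" "x \<notin> U" "x \<notin> Q2"
  shows "FK Q2 K (insert x U) = 0"
proof -
  have inj: "inj_on (insert x) (Pow U)"
    using assms(2) by (intro inj_onI) (metis Pow_iff insert_Diff_if insert_absorb insert_is_Un subset_eq Un_Diff_cancel Diff_insert_absorb)
  have disj: "Pow U \<inter> insert x ` Pow U = {}" using assms(2) by auto
  have "FK Q2 K (insert x U) = (\<Sum>T\<in>Pow U. wK Q2 K T) + (\<Sum>T\<in>insert x ` Pow U. wK Q2 K T)"
    unfolding FK_def Pow_insert by (rule sum.union_disjoint) (use assms disj in auto)
  also have "(\<Sum>T\<in>insert x ` Pow U. wK Q2 K T) = (\<Sum>T\<in>Pow U. wK Q2 K (insert x T))"
    by (rule sum.reindex[OF inj, unfolded comp_def])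
  also have "\<dots> = (\<Sum>T\<in>Pow U. - wK Q2 K T)"
  proof (rule sum.cong[OF refl])
    fix T assume "T \<in> Pow U"
    then have "finite T" "x \<notin> T" using assms finite_subset by auto
    moreover have "insert x T \<inter> Q2 = T \<inter> Q2" using assms(3) by auto
    ultimately show "wK Q2 K (insert x T) = - wK Q2 K T" unfolding wK_def by simp
  qed
  finally show ?thesis by (simp add: sum_negf)
qed

lemma FK_nonQ2:
  assumes "finite U" "\<not> U \<subseteq> Q2"
  shows "FK Q2 K U = 0"
proof -
  obtain x where x: "x \<in> U" "x \<notin> Q2" using assms by auto
  then have "U = insert x (U - {x})" by auto
  then show ?thesis using FK_insert_nonQ2[of "U - {x}" x Q2 K] assms x by simp
qed

lemma FK_Q2:
  assumes "finite U" "U \<subseteq> Q2"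
  shows "FK Q2 K U = (\<Sum>i\<le>K. (-1)^i * real (card U choose i))"
proof -
  have "FK Q2 K U = (\<Sum>T\<in>Pow U. (if card T \<le> K then (-1)^card T else 0))"
    unfolding FK_def wK_def using assms by (intro sum.cong refl) (auto simp: Int_absorb2)
  then show ?thesis using card_subsets_sum[OF assms(1)] by simp
qed

definition RK :: "nat set \<Rightarrow> nat \<Rightarrow> nat set \<Rightarrow> real" where
  "RK Q2 K U = FK Q2 K U - (if U = {} then 1 else 0)"

lemma RK_sign:
  assumes "finite U"
  shows "(-1)^K * RK Q2 K U \<ge> 0"
proof (cases "U \<subseteq> Q2")
  case True
  show ?thesis
  proof (cases "U = {}")
    case True then show ?thesis unfolding RK_def FK_def wK_def by simp
  next
    case False
    then have "card U \<noteq> 0" using assms by simp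
    then have "RK Q2 K U = (-1)^K * real ((card U - 1) choose K)"
      unfolding RK_def using FK_Q2[OF assms True] alt_partial False by simp
    then show ?thesis by (simp add: mult.assoc[symmetric] power_mult_distrib[symmetric])
  qed
next
  case False
  then have "U \<noteq> {}" by auto
  then show ?thesis unfolding RK_def using FK_nonQ2[OF assms False] by simp
qed

lemma RK_abs:
  assumes "finite U"
  shows "\<bar>RK Q2 K U\<bar> \<le> (if U \<subseteq> Q2 then real (card U choose Suc K) else 0)"
proof (cases "U \<subseteq> Q2")
  case True
  show ?thesis
  proof (cases "U = {}")
    case True then show ?thesis unfolding RK_def FK_def wK_def by simp
  next
    case False
    then obtain j where j: "card U = Suc j" using assms by (cases "card U") auto
    then have "RK Q2 K U = (-1)^K * real (j choose K)"
      unfolding RK_def using FK_Q2[OF assms True] alt_partial False by simp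
    then have "\<bar>RK Q2 K U\<bar> = real (j choose K)" by (simp add: abs_mult)
    also have "\<dots> \<le> real (Suc j choose Suc K)" by (simp add: binomial_Suc_Suc)
    finally show ?thesis using True j by simp
  qed
next
  case False
  then have "U \<noteq> {}" by auto
  then show ?thesis unfolding RK_def using FK_nonQ2[OF assms False] False by simp
qed

lemma swap_sum:
  fixes w :: "nat set \<Rightarrow> real" and c :: "'a \<Rightarrow> real" and P :: "'a \<Rightarrow> nat set"
  assumes "finite I" "finite Q" "\<And>i. i \<in> I \<Longrightarrow> P i \<subseteq> Q"
  shows "(\<Sum>T\<in>Pow Q. w T * (\<Sum>i\<in>I. c i * (if T \<subseteq> P i then 1 else 0))) = (\<Sum>i\<in>I. c i * (\<Sum>T\<in>Pow (P i). w T)) "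
proof -
  have "(\<Sum>T\<in>Pow Q. w T * (\<Sum>i\<in>I. c i * (if T \<subseteq> P i then 1 else 0)))
      = (\<Sum>T\<in>Pow Q. \<Sum>i\<in>I. c i * (if T \<subseteq> P i then w T else 0))"
  proof (rule sum.cong[OF refl])
    fix T
    show "w T * (\<Sum>i\<in>I. c i * (if T \<subseteq> P i then 1 else 0)) = (\<Sum>i\<in>I. c i * (if T \<subseteq> P i then w T else 0))"
      unfolding sum_distrib_left by (rule sum.cong) auto
  qed
  also have "\<dots> = (\<Sum>i\<in>I. \<Sum>T\<in>Pow Q. c i * (if T \<subseteq> P i then w T else 0))"
    by (rule sum.swap)
  also have "\<dots> = (\<Sum>i\<in>I. c i * (\<Sum>T\<in>Pow (P i). w T))"
  proof (rule sum.cong[OF refl])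
    fix i assume i: "i \<in> I"
    have "(\<Sum>T\<in>Pow Q. (if T \<subseteq> P i then w T else 0)) = (\<Sum>T\<in>{T\<in>Pow Q. T \<subseteq> P i}. w T)"
      by (rule sum.inter_filter[symmetric]) (use assms in simp)
    also have "{T\<in>Pow Q. T \<subseteq> P i} = Pow (P i)" using assms(3)[OF i] by auto
    finally show "(\<Sum>T\<in>Pow Q. c i * (if T \<subseteq> P i then w T else 0)) = c i * (\<Sum>T\<in>Pow (P i). w T)"
      by (simp add: sum_distrib_left[symmetric])
  qed
  finally show ?thesis .
qed

definition piU :: "nat set \<Rightarrow> (nat \<Rightarrow> real) \<Rightarrow> nat set \<Rightarrow> real" where
  "piU Q g U = (\<Prod>q\<in>U. g q) * (\<Prod>q\<in>Q - U. 1 - g q)"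

lemma prod_expand:
  assumes "finite Q" "T \<subseteq> Q"
  shows "(\<Prod>q\<in>T. g q) = (\<Sum>U\<in>Pow Q. piU Q g U * (if T \<subseteq> U then 1 else 0))"
proof -
  define f2 where "f2 q = (if q \<in> T then 0 else 1 - g q)" for q
  have "(\<Prod>q\<in>Q. g q + f2 q) = (\<Sum>U\<in>Pow Q. (\<Prod>q\<in>U. g q) * (\<Prod>q\<in>Q - U. f2 q))"
    by (rule prod_add[OF assms(1)])
  moreover have "(\<Prod>q\<in>Q. g q + f2 q) = (\<Prod>q\<in>T. g q)"
  proof -
    have "(\<Prod>q\<in>Q. g q + f2 q) = (\<Prod>q\<in>Q. if q \<in> T then g q else 1)"
      unfolding f2_def by (intro prod.cong) auto
    also have "\<dots> = (\<Prod>q\<in>Q \<inter> T. g q)" by (rule prod.inter_restrict[symmetric]) (rule assms(1))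
    finally show ?thesis using assms(2) by (simp add: Int_absorb1)
  qed
  moreover have "(\<Prod>q\<in>U. g q) * (\<Prod>q\<in>Q - U. f2 q) = piU Q g U * (if T \<subseteq> U then 1 else 0)"
    if "U \<in> Pow Q" for U
  proof (cases "T \<subseteq> U")
    case True
    then have "(\<Prod>q\<in>Q - U. f2 q) = (\<Prod>q\<in>Q - U. 1 - g q)" unfolding f2_def by (intro prod.cong) auto
    then show ?thesis using True unfolding piU_def by simp
  next
    case False
    then obtain x where "x \<in> T" "x \<notin> U" by auto
    then have "x \<in> Q - U" "f2 x = 0" using assms unfolding f2_def by auto
    then have "(\<Prod>q\<in>Q - U. f2 q) = 0" using assms(1) by (intro prod_zero) auto
    then show ?thesis using False by simp
  qed
  ultimately show ?thesis by (metis (no_types, lifting) sum.cong)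
qed


lemma card_filter_sum:
  assumes "finite A"
  shows "real (card {a\<in>A. \<Phi> a}) = (\<Sum>a\<in>A. if \<Phi> a then 1 else 0)"
proof -
  have "real (card {a\<in>A. \<Phi> a}) = (\<Sum>a\<in>{a\<in>A. \<Phi> a}. 1)" by simp
  also have "\<dots> = (\<Sum>a\<in>A. if \<Phi> a then 1 else 0)" by (rule sum.inter_filter[OF assms])
  finally show ?thesis .
qed

lemma binom_pow_bound:
  "real (j choose Suc K) * 4^(Suc K) \<le> 5^j"
proof (cases "Suc K \<le> j")
  case True
  have "(4 + 1 :: real)^j = (\<Sum>i\<le>j. real (j choose i) * 4^i * 1^(j-i))"
    by (rule binomial_ring)
  also have "\<dots> \<ge> real (j choose Suc K) * 4^(Suc K) * 1^(j - Suc K)"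
    by (rule member_le_sum) (use True in auto)
  finally show ?thesis by simp
next
  case False then show ?thesis by (simp add: binomial_eq_0)
qed

lemma main_term_bound:
  fixes g :: "nat \<Rightarrow> real"
  assumes "finite Q" "Q2 \<subseteq> Q" "\<forall>q\<in>Q. 0 \<le> g q \<and> g q < 1"
    and K: "5 * (\<Sum>q\<in>Q2. g q / (1 - g q)) + ln 2 \<le> real (Suc K) * ln 4"
  shows "\<bar>(\<Sum>T\<in>Pow Q. wK Q2 K T * (\<Prod>q\<in>T. g q)) - (\<Prod>q\<in>Q. 1 - g q)\<bar> \<le> (\<Prod>q\<in>Q. 1 - g q) / 2"
proof -
  define W where "W = (\<Prod>q\<in>Q. 1 - g q)"
  define h where "h q = g q / (1 - g q)" for q
  define H where "H = (\<Sum>q\<in>Q2. h q)"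
  have fQ2: "finite Q2" using assms finite_subset by blast
  have W0: "W \<ge> 0" unfolding W_def using assms by (intro prod_nonneg) auto
  have h0: "h q \<ge> 0" if "q \<in> Q2" for q
  proof -
    have "q \<in> Q" using that assms by auto
    then have "g q \<ge> 0" "1 - g q > 0" using assms by auto
    then show ?thesis unfolding h_def by simp
  qed
  have pi0: "piU Q g U \<ge> 0" if "U \<subseteq> Q" for U
    unfolding piU_def using assms that by (intro mult_nonneg_nonneg prod_nonneg) auto
  have M: "(\<Sum>T\<in>Pow Q. wK Q2 K T * (\<Prod>q\<in>T. g q)) = (\<Sum>U\<in>Pow Q. piU Q g U * FK Q2 K U)"
  proof -
    have "(\<Sum>T\<in>Pow Q. wK Q2 K T * (\<Prod>q\<in>T. g q))
        = (\<Sum>T\<in>Pow Q. wK Q2 K T * (\<Sum>U\<in>Pow Q. piU Q g U * (if T \<subseteq> id U then 1 else 0)))"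
      using prod_expand[OF assms(1)] by (intro sum.cong refl) auto
    also have "\<dots> = (\<Sum>U\<in>Pow Q. piU Q g U * (\<Sum>T\<in>Pow (id U). wK Q2 K T))"
      by (rule swap_sum) (use assms in auto)
    finally show ?thesis unfolding FK_def by simp
  qed
  have piE: "piU Q g {} = W" unfolding piU_def W_def by simp
  have "(\<Sum>U\<in>Pow Q. piU Q g U * FK Q2 K U) = (\<Sum>U\<in>Pow Q. piU Q g U * RK Q2 K U + piU Q g U * (if U = {} then 1 else 0))"
    unfolding RK_def by (intro sum.cong refl) (simp add: algebra_simps)
  also have "\<dots> = (\<Sum>U\<in>Pow Q. piU Q g U * RK Q2 K U) + W"
  proof -
    have "(\<Sum>U\<in>Pow Q. piU Q g U * (if U = {} then 1 else 0)) = (\<Sum>U\<in>Pow Q. if U = {} then piU Q g U else 0)"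
      by (intro sum.cong refl) simp
    also have "\<dots> = piU Q g {}" by (subst sum.delta) (use assms in auto)
    finally show ?thesis using piE by (simp add: sum.distrib)
  qed
  finally have diff: "(\<Sum>T\<in>Pow Q. wK Q2 K T * (\<Prod>q\<in>T. g q)) - W = (\<Sum>U\<in>Pow Q. piU Q g U * RK Q2 K U)"
    using M by simp
  have "\<bar>\<Sum>U\<in>Pow Q. piU Q g U * RK Q2 K U\<bar> \<le> (\<Sum>U\<in>Pow Q. piU Q g U * (if U \<subseteq> Q2 then real (card U choose Suc K) else 0))"
  proof -
    have "\<bar>\<Sum>U\<in>Pow Q. piU Q g U * RK Q2 K U\<bar> \<le> (\<Sum>U\<in>Pow Q. \<bar>piU Q g U * RK Q2 K U\<bar>)"
      by (rule sum_abs)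
    also have "\<dots> \<le> (\<Sum>U\<in>Pow Q. piU Q g U * (if U \<subseteq> Q2 then real (card U choose Suc K) else 0))"
    proof (rule sum_mono)
      fix U assume U: "U \<in> Pow Q"
      then have "finite U" using assms finite_subset by auto
      then show "\<bar>piU Q g U * RK Q2 K U\<bar> \<le> piU Q g U * (if U \<subseteq> Q2 then real (card U choose Suc K) else 0)"
        using RK_abs[of U Q2 K] pi0[of U] U by (simp add: abs_mult mult_left_mono)
    qed
    finally show ?thesis .
  qed
  also have "\<dots> = (\<Sum>U\<in>Pow Q2. piU Q g U * real (card U choose Suc K))"
  proof -
    have "(\<Sum>U\<in>Pow Q. piU Q g U * (if U \<subseteq> Q2 then real (card U choose Suc K) else 0))
        = (\<Sum>U\<in>Pow Q. if U \<in> Pow Q2 then piU Q g U * real (card U choose Suc K) else 0)"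
      by (intro sum.cong refl) simp
    also have "\<dots> = (\<Sum>U\<in>Pow Q \<inter> Pow Q2. piU Q g U * real (card U choose Suc K))"
      by (rule sum.inter_restrict[symmetric]) (use assms in simp)
    also have "Pow Q \<inter> Pow Q2 = Pow Q2" using assms by auto
    finally show ?thesis .
  qed
  also have "\<dots> \<le> (\<Sum>U\<in>Pow Q2. W * (\<Prod>q\<in>U. 5 * h q) / 4^(Suc K))"
  proof (rule sum_mono)
    fix U assume U: "U \<in> Pow Q2"
    then have UQ: "U \<subseteq> Q" using assms by auto
    have fU: "finite U" using U fQ2 finite_subset by auto
    have "W = (\<Prod>q\<in>Q - U. 1 - g q) * (\<Prod>q\<in>U. 1 - g q)"
      unfolding W_def by (rule prod.subset_diff[OF UQ assms(1)])
    moreover have "(\<Prod>q\<in>U. g q) = (\<Prod>q\<in>U. h q) * (\<Prod>q\<in>U. 1 - g q)"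
    proof -
      have "(\<Prod>q\<in>U. g q) = (\<Prod>q\<in>U. h q * (1 - g q))"
        using assms UQ unfolding h_def by (intro prod.cong refl) (metis (no_types, lifting) less_irrefl subsetD nonzero_eq_divide_eq right_minus_eq)
      then show ?thesis by (simp add: prod.distrib)
    qed
    ultimately have piW: "piU Q g U = W * (\<Prod>q\<in>U. h q)" unfolding piU_def by simp
    have "(\<Prod>q\<in>U. 5 * h q) = 5 ^ card U * (\<Prod>q\<in>U. h q)" by (simp add: prod.distrib)
    moreover have hp: "(\<Prod>q\<in>U. h q) \<ge> 0" using h0 U by (intro prod_nonneg) auto
    moreover have "real (card U choose Suc K) \<le> 5 ^ card U / 4^(Suc K)"
      using binom_pow_bound[of "card U" K] by (simp add: field_simps)
    ultimately have "W * (\<Prod>q\<in>U. h q) * real (card U choose Suc K) \<le> W * (\<Prod>q\<in>U. h q) * (5 ^ card U / 4^(Suc K))"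
      using W0 by (intro mult_left_mono) auto
    also have "\<dots> = W * (\<Prod>q\<in>U. 5 * h q) / 4^(Suc K)"
      using \<open>(\<Prod>q\<in>U. 5 * h q) = 5 ^ card U * (\<Prod>q\<in>U. h q)\<close> by simp
    finally show "piU Q g U * real (card U choose Suc K) \<le> W * (\<Prod>q\<in>U. 5 * h q) / 4^(Suc K)"
      using piW by simp
  qed
  also have "\<dots> = W / 4^(Suc K) * (\<Prod>q\<in>Q2. 5 * h q + 1)"
  proof -
    have "(\<Prod>q\<in>Q2. 5 * h q + 1) = (\<Sum>U\<in>Pow Q2. (\<Prod>q\<in>U. 5 * h q) * (\<Prod>q\<in>Q2 - U. 1))"
      by (rule prod_add[OF fQ2])
    then show ?thesis by (simp add: sum_distrib_left sum_divide_distrib)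
  qed
  also have "\<dots> \<le> W / 4^(Suc K) * exp (5 * H)"
  proof -
    have "(\<Prod>q\<in>Q2. 5 * h q + 1) \<le> (\<Prod>q\<in>Q2. exp (5 * h q))"
      using h0 by (intro prod_mono) (auto simp: add.commute[of _ 1] exp_ge_add_one_self)
    also have "\<dots> = exp (5 * H)" unfolding H_def by (simp add: exp_sum[OF fQ2] sum_distrib_left)
    finally show ?thesis using W0 by (intro mult_left_mono) auto
  qed
  also have "\<dots> \<le> W / 2"
  proof -
    have "exp (5 * H) \<le> exp (real (Suc K) * ln 4 - ln 2)"
      using K unfolding H_def h_def by simp
    also have "\<dots> = 4^(Suc K) / 2"
    proof -
      have "exp (real (Suc K) * ln 4) = exp (ln 4) ^ Suc K" by (rule exp_of_nat_mult)
      then have "exp (real (Suc K) * ln 4) = 4 ^ Suc K" by simp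
      then show ?thesis by (simp add: exp_diff)
    qed
    finally have "exp (5 * H) \<le> 4^(Suc K) / 2" .
    then show ?thesis using W0 by (simp add: field_simps mult_left_mono)
  qed
  finally show ?thesis using diff unfolding W_def by simp
qed


lemma sieve_bounds:
  fixes A :: "'a set" and P :: "'a \<Rightarrow> nat set" and g :: "nat \<Rightarrow> real" and e :: "nat set \<Rightarrow> real"
  assumes fA: "finite A" and fQ: "finite Q" and Q2: "Q2 \<subseteq> Q" and PQ: "\<forall>a\<in>A. P a \<subseteq> Q"
    and g: "\<forall>q\<in>Q. 0 \<le> g q \<and> g q < 1"
    and N: "\<forall>T. T \<subseteq> Q \<longrightarrow> real (card {a\<in>A. T \<subseteq> P a}) = real (card A) * (\<Prod>q\<in>T. g q) + e T"
    and K: "5 * (\<Sum>q\<in>Q2. g q / (1 - g q)) + ln 2 \<le> real (Suc K) * ln 4"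
  shows "(even K \<longrightarrow> real (card {a\<in>A. P a = {}}) \<le> 3/2 * real (card A) * (\<Prod>q\<in>Q. 1 - g q) + \<bar>\<Sum>T\<in>Pow Q. wK Q2 K T * e T\<bar>)
       \<and> (odd K \<longrightarrow> 1/2 * real (card A) * (\<Prod>q\<in>Q. 1 - g q) - \<bar>\<Sum>T\<in>Pow Q. wK Q2 K T * e T\<bar> \<le> real (card {a\<in>A. P a = {}}))"
proof -
  define W where "W = (\<Prod>q\<in>Q. 1 - g q)"
  define M where "M = (\<Sum>T\<in>Pow Q. wK Q2 K T * (\<Prod>q\<in>T. g q))"
  define E where "E = (\<Sum>T\<in>Pow Q. wK Q2 K T * e T)"
  define SK where "SK = (\<Sum>T\<in>Pow Q. wK Q2 K T * real (card {a\<in>A. T \<subseteq> P a}))"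
  define S where "S = real (card {a\<in>A. P a = {}})"
  have MW: "\<bar>M - W\<bar> \<le> W / 2" unfolding M_def W_def by (rule main_term_bound[OF fQ Q2 g K])
  have cA: "real (card A) \<ge> 0" by simp
  have SK1: "SK = real (card A) * M + E"
  proof -
    have "SK = (\<Sum>T\<in>Pow Q. wK Q2 K T * (real (card A) * (\<Prod>q\<in>T. g q) + e T))"
      unfolding SK_def using N by (intro sum.cong refl) auto
    then show ?thesis unfolding M_def E_def by (simp add: algebra_simps sum.distrib sum_distrib_left)
  qed
  have SK2: "SK = (\<Sum>a\<in>A. FK Q2 K (P a))"
  proof -
    have "SK = (\<Sum>T\<in>Pow Q. wK Q2 K T * (\<Sum>a\<in>A. 1 * (if T \<subseteq> P a then 1 else 0)))"
      unfolding SK_def using card_filter_sum[OF fA] by simp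
    also have "\<dots> = (\<Sum>a\<in>A. 1 * (\<Sum>T\<in>Pow (P a). wK Q2 K T))"
      by (rule swap_sum) (use fA fQ PQ in auto)
    finally show ?thesis unfolding FK_def by simp
  qed
  have S1: "S = (\<Sum>a\<in>A. if P a = {} then 1 else 0)" unfolding S_def by (rule card_filter_sum[OF fA])
  have diff: "SK - S = (\<Sum>a\<in>A. RK Q2 K (P a))"
    unfolding SK2 S1 RK_def by (simp add: sum_subtractf)
  have finP: "finite (P a)" if "a \<in> A" for a using PQ that fQ by (meson finite_subset)
  have ev: "S \<le> SK" if "even K"
  proof -
    have "(\<Sum>a\<in>A. RK Q2 K (P a)) \<ge> 0"
    proof (rule sum_nonneg)
      fix a assume "a \<in> A"
      have "(-1)^K * RK Q2 K (P a) \<ge> 0" by (rule RK_sign[OF finP[OF \<open>a \<in> A\<close>]])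
      then show "RK Q2 K (P a) \<ge> 0" using that by simp
    qed
    then show ?thesis using diff by simp
  qed
  have od: "SK \<le> S" if "odd K"
  proof -
    have "(\<Sum>a\<in>A. RK Q2 K (P a)) \<le> 0"
    proof (rule sum_nonpos)
      fix a assume "a \<in> A"
      have "(-1)^K * RK Q2 K (P a) \<ge> 0" by (rule RK_sign[OF finP[OF \<open>a \<in> A\<close>]])
      then show "RK Q2 K (P a) \<le> 0" using that by simp
    qed
    then show ?thesis using diff by simp
  qed
  have M1: "M \<le> 3/2 * W" "1/2 * W \<le> M" using MW abs_le_D1[of "M - W"] abs_le_D2[of "M - W"] by linarith+
  have "real (card A) * M \<le> real (card A) * (3/2 * W)" using M1 cA by (intro mult_left_mono) auto
  moreover have "real (card A) * (1/2 * W) \<le> real (card A) * M" using M1 cA by (intro mult_left_mono) auto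
  moreover have "\<bar>E\<bar> \<ge> E" "\<bar>E\<bar> \<ge> - E" by auto
  ultimately show ?thesis using ev od SK1 unfolding S_def[symmetric] W_def[symmetric] E_def[symmetric]
    by (auto simp: algebra_simps)
qed


lemma coprime_prime_prod:
  fixes p :: nat
  assumes "finite T" "prime p" "\<forall>q\<in>T. prime q" "p \<notin> T"
  shows "coprime p (\<Prod>T)"
proof -
  have "\<not> p dvd \<Prod>T"
  proof
    assume "p dvd \<Prod>T"
    then obtain x where "x \<in> T" "p dvd x"
      using prime_dvd_prod_iff[of T p "\<lambda>x. x"] assms by auto
    then have "p = x" by (intro primes_dvd_imp_eq) (use assms \<open>x\<in>T\<close> in auto)
    with assms \<open>x\<in>T\<close> show False by simp
  qed
  then show ?thesis by (rule prime_imp_coprime[OF assms(2)])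
qed

lemma prod_primes_pos:
  fixes T :: "nat set"
  assumes "\<forall>q\<in>T. prime q" shows "\<Prod>T > 0"
  using assms by (intro prod_pos) (auto simp: prime_gt_0_nat)

lemma m_prod:
  assumes "multiplicative_pos m" "finite T" "\<forall>q\<in>T. prime q"
  shows "m (\<Prod>T) = (\<Prod>q\<in>T. m q)"
  using assms(2,3)
proof (induction T rule: finite_induct)
  case empty then show ?case using assms(1) unfolding multiplicative_pos_def by simp
next
  case (insert p T)
  have pT: "prime p" "\<forall>q\<in>T. prime q" using insert.prems by auto
  have cop: "coprime p (\<Prod>T)" by (rule coprime_prime_prod[OF insert.hyps(1) pT(1) pT(2) insert.hyps(2)])
  have p0: "p > 0" using pT(1) by (rule prime_gt_0_nat)
  have T0: "\<Prod>T > 0" using pT(2) by (rule prod_primes_pos)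
  have mult: "\<forall>a b. a > 0 \<longrightarrow> b > 0 \<longrightarrow> coprime a b \<longrightarrow> m (a * b) = m a * m b"
    using assms(1) unfolding multiplicative_pos_def by blast
  have "m (p * \<Prod>T) = m p * m (\<Prod>T)" using mult p0 T0 cop by blast
  then show ?case using insert.hyps insert.IH pT by simp
qed

lemma gen_card_sum:
  assumes "finite U"
  shows "(\<Sum>T\<in>Pow U. (f (card T) :: real)) = (\<Sum>i\<le>card U. real (card U choose i) * f i)"
proof -
  have "(\<Sum>T\<in>Pow U. f (card T)) = (\<Sum>i\<in>{..card U}. \<Sum>T\<in>{T. T \<in> Pow U \<and> card T = i}. f (card T))"
    by (rule sum.group[symmetric]) (use assms in \<open>auto intro: card_mono\<close>)
  also have "\<dots> = (\<Sum>i\<in>{..card U}. real (card U choose i) * f i)"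
  proof (rule sum.cong[OF refl])
    fix i
    have "{T. T \<in> Pow U \<and> card T = i} = {T. T \<subseteq> U \<and> card T = i}" by auto
    then show "(\<Sum>T\<in>{T. T \<in> Pow U \<and> card T = i}. f (card T)) = real (card U choose i) * f i"
      using n_subsets[OF assms, of i] by simp
  qed
  finally show ?thesis .
qed

lemma geom_pow_bound:
  fixes D :: real assumes "D \<ge> 2"
  shows "(\<Sum>i\<le>L. if i \<noteq> 0 then D^i else 0) \<le> D^(Suc L)"
proof (induction L)
  case 0 then show ?case using assms by simp
next
  case (Suc L)
  have "(\<Sum>i\<le>Suc L. if i \<noteq> 0 then D^i else 0) \<le> D^Suc L + D^Suc L" using Suc by simp
  also have "\<dots> \<le> D * D^Suc L" using assms by (simp add: mult_right_mono)
  finally show ?case by simp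
qed

lemma subsets_pow_bound:
  fixes Q :: "nat set" and d :: nat
  assumes "finite Q" "real d * real (card Q) \<ge> 2"
  shows "(\<Sum>T\<in>Pow Q. if card T \<le> L \<and> card T \<noteq> 0 then real d ^ card T else 0)
     \<le> (real d * real (card Q)) ^ Suc L"
proof -
  define k where "k = card Q"
  define D where "D = real d * real k"
  define \<psi> where "\<psi> i = (if i \<le> L \<and> i \<noteq> 0 then D^i else 0)" for i
  have "(\<Sum>T\<in>Pow Q. if card T \<le> L \<and> card T \<noteq> 0 then real d ^ card T else 0)
      = (\<Sum>i\<le>k. real (k choose i) * (if i \<le> L \<and> i \<noteq> 0 then real d ^ i else 0))"
    unfolding k_def by (rule gen_card_sum[OF assms(1), of "\<lambda>i. if i \<le> L \<and> i \<noteq> 0 then real d ^ i else 0"])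
  also have "\<dots> \<le> (\<Sum>i\<le>k. \<psi> i)"
  proof (rule sum_mono)
    fix i assume "i \<in> {..k}"
    then have "k choose i \<le> k ^ i" by (intro binomial_le_pow) auto
    then have "real (k choose i) \<le> real k ^ i" by (metis of_nat_le_iff of_nat_power)
    then have "real (k choose i) * real d ^ i \<le> real k ^ i * real d ^ i" by (intro mult_right_mono) auto
    then show "real (k choose i) * (if i \<le> L \<and> i \<noteq> 0 then real d ^ i else 0) \<le> \<psi> i"
      unfolding \<psi>_def D_def by (simp add: power_mult_distrib mult.commute)
  qed
  also have "\<dots> \<le> (\<Sum>i\<le>max k L. \<psi> i)"
    by (rule sum_mono2) (auto simp: \<psi>_def D_def)
  also have "\<dots> = (\<Sum>i\<le>L. \<psi> i)"
    by (rule sum.mono_neutral_right) (auto simp: \<psi>_def)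
  also have "\<dots> = (\<Sum>i\<le>L. if i \<noteq> 0 then D^i else 0)"
    unfolding \<psi>_def by (intro sum.cong refl) auto
  also have "\<dots> \<le> D ^ Suc L" by (rule geom_pow_bound) (use assms in \<open>simp add: D_def k_def\<close>)
  finally show ?thesis unfolding D_def k_def .
qed



lemma hb_point:
  fixes mq q d :: real
  assumes mq0: "mq > 0" and mqd: "mq \<le> d" and q3: "3 * d < q" and d1: "d \<ge> 1"
  shows "(mq / q) / (1 - mq / q) \<le> 3/2 * d * (1 / q)"
proof -
  have qp: "q > 0" using q3 d1 by linarith
  have qm: "q - mq > 0" using mqd q3 d1 by linarith
  have a1: "mq * q \<le> d * q" using mqd qp by (intro mult_right_mono) auto
  have a2: "d * mq \<le> d * d" using mqd d1 by (intro mult_left_mono) auto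
  have a3: "d * (3 * d) \<le> d * q" using q3 d1 by (intro mult_left_mono) auto
  have e1: "3 * d * (q - mq) = 3 * (d * q) - 3 * (d * mq)" by (simp add: algebra_simps)
  have e2: "d * (3 * d) = 3 * (d * d)" by simp
  have key: "2 * (mq * q) \<le> 3 * d * (q - mq)" using a1 a2 a3 e1 e2 by linarith
  have eq: "(mq / q) / (1 - mq / q) = mq / (q - mq)" using qp by (simp add: field_simps)
  have h: "mq / (q - mq) \<le> (3 * d) / (2 * q)"
    using key qp qm by (simp add: divide_simps)
  have r: "3/2 * d * (1/q) = (3 * d) / (2 * q)" by simp
  show ?thesis unfolding eq r using h .
qed

lemma final_numeric:
  fixes x l s H :: real and K0 k1 :: nat
  assumes "x \<ge> 1" "l \<ge> 0" "s \<le> 2*l + 9/2" "0 \<le> H" "H \<le> 3/2 * (x * s)" "real k1 \<le> 3*x"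
    "real K0 \<le> 15/4*H + 1"
  shows "real (K0 + k1 + 2) \<le> 4*(x+1)^2*(2+l) + 2"
proof -
  have xs: "x * s \<le> x * (2*l + 9/2)" using assms by (intro mult_left_mono) auto
  have "(x - 1)^2 \<ge> 0" by simp
  moreover have "(x - 1)^2 = x^2 - 2*x + 1" by (simp add: power2_eq_square algebra_simps)
  ultimately have x2: "x^2 \<ge> 2*x - 1" by linarith
  have x2l: "x^2 * l \<ge> (2*x - 1) * l" using x2 assms by (intro mult_right_mono) auto
  have xl: "x * l \<ge> 0" using assms by simp
  have eq: "4*(x+1)^2*(2+l) + 2 = 8*x^2 + 16*x + 10 + 4*(x^2*l) + 8*(x*l) + 4*l"
    by (simp add: power2_eq_square algebra_simps)
  have eq2: "x * (2*l + 9/2) = 2*(x*l) + 9/2*x" by (simp add: algebra_simps)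
  have eq3: "(2*x - 1) * l = 2*(x*l) - l" by (simp add: algebra_simps)
  have "real (K0 + k1 + 2) = real K0 + real k1 + 2" by simp
  then show ?thesis using assms xs x2 x2l xl eq eq2 eq3 by linarith
qed

theorem lemma3:
  fixes A :: "int set" and Q :: "nat set" and n d :: nat
    and m :: "nat \<Rightarrow> real" and \<sigma> :: "nat \<Rightarrow> real" and Ar :: "nat \<Rightarrow> int set"
  assumes "finite A" "A \<noteq> {}" "finite Q" "Q \<noteq> {}"
    and "\<forall>q\<in>Q. prime q"
    and "n = (\<Prod>q\<in>Q. q)"
    and "d > 0"
    and "multiplicative_pos m"
    and "\<forall>q\<in>Q. m q \<le> real q - 1"
    and "\<forall>r\<in>divisors_set n. Ar r \<subseteq> A"
    and "\<forall>r\<in>divisors_set n. \<forall>s\<in>divisors_set n. coprime r s \<longrightarrow> Ar (r * s) = Ar r \<inter> Ar s"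
    and "Ar 1 = A"
    and "\<forall>r\<in>divisors_set n. real (card (Ar r)) = real (card A) * (m r / real r) + \<sigma> r"
    and "\<forall>r\<in>divisors_set n. \<bar>\<sigma> r\<bar> \<le> m r"
    and "\<forall>q\<in>Q. m q \<le> real d"
  shows "(1/2) * real (card A) * W_m m Q - B_bound Q d \<le> real (card (A - (\<Union>q\<in>Q. Ar q)))
       \<and> real (card (A - (\<Union>q\<in>Q. Ar q))) \<le> (3/2) * real (card A) * W_m m Q + B_bound Q d"
proof -
  note fA = assms(1) and fQ = assms(3) and prQ = assms(5) and nQ = assms(6) and mult = assms(8)
  note mq = assms(9) and ArA = assms(10) and indep = assms(11) and Ar1 = assms(12)
  note dens = assms(13) and sig = assms(14) and md = assms(15)
  define P where "P a = {q\<in>Q. a \<in> Ar q}" for a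
  define g where "g q = m q / real q" for q
  define k where "k = card Q"
  define cA where "cA = real (card A)"
  define ll where "ll = ln (ln (real k + 1))"
  define E where "E = 4 * (real d + 1)^2 * (2 + ll) + 2"
  define D where "D = real d * real k"
  have B_eq: "B_bound Q d = D powr E" unfolding B_bound_def D_def E_def ll_def k_def by simp
  have mpos: "\<And>a. a > 0 \<Longrightarrow> m a > 0" using mult unfolding multiplicative_pos_def by blast
  have m1: "m 1 = 1" using mult unfolding multiplicative_pos_def by blast
  have qpos: "q > 0" if "q \<in> Q" for q using prQ that prime_gt_0_nat by blast
  have g01: "\<forall>q\<in>Q. 0 \<le> g q \<and> g q < 1"
  proof
    fix q assume q: "q \<in> Q"
    have "m q > 0" using mpos qpos[OF q] by blast
    moreover have "m q < real q" using mq q by force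
    moreover have "real q > 0" using qpos[OF q] by simp
    ultimately show "0 \<le> g q \<and> g q < 1" unfolding g_def by simp
  qed
  have n0: "n > 0" unfolding nQ using prQ by (intro prod_primes_pos) simp
  have div: "\<Prod>T \<in> divisors_set n" if "T \<subseteq> Q" for T
  proof -
    have "\<forall>q\<in>T. prime q" using prQ that by blast
    then have "\<Prod>T > 0" by (rule prod_primes_pos)
    moreover have "\<Prod>T dvd n" unfolding nQ using fQ that by (rule prod_dvd_prod_subset)
    ultimately show ?thesis unfolding divisors_set_def by simp
  qed
  have ArT: "Ar (\<Prod>T) = {a\<in>A. T \<subseteq> P a}" if "T \<subseteq> Q" for T
  proof -
    have fT: "finite T" using fQ that finite_subset by blast
    show ?thesis
    proof (rule finite_subset_induct'[OF fT that, where P="\<lambda>T. Ar (\<Prod>T) = {a\<in>A. T \<subseteq> P a}"])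
      show "Ar (\<Prod>{}) = {a\<in>A. {} \<subseteq> P a}" using Ar1 by simp
    next
      fix q T assume hyps: "finite T" "q \<in> Q" "T \<subseteq> Q" "q \<notin> T"
        and IH: "Ar (\<Prod>T) = {a\<in>A. T \<subseteq> P a}"
      have TQ: "T \<subseteq> Q" using hyps(3) .
      have cop: "coprime q (\<Prod>T)"
        by (rule coprime_prime_prod) (use hyps prQ TQ in auto)
      have qd: "q \<in> divisors_set n" using div[of "{q}"] hyps by simp
      have Td: "\<Prod>T \<in> divisors_set n" using div TQ by blast
      have "Ar (\<Prod>(insert q T)) = Ar (q * \<Prod>T)" using hyps by simp
      also have "\<dots> = Ar q \<inter> Ar (\<Prod>T)" using indep qd Td cop by blast
      also have "\<dots> = Ar q \<inter> {a\<in>A. T \<subseteq> P a}" using IH by simp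
      also have "\<dots> = {a\<in>A. insert q T \<subseteq> P a}" using hyps unfolding P_def by auto
      finally show "Ar (\<Prod>(insert q T)) = {a\<in>A. insert q T \<subseteq> P a}" .
    qed
  qed
  have sig1: "\<sigma> 1 = 0"
  proof -
    have "1 \<in> divisors_set n" unfolding divisors_set_def by simp
    then have "real (card (Ar 1)) = real (card A) * (m 1 / real 1) + \<sigma> 1" using dens by blast
    then show ?thesis using Ar1 m1 by simp
  qed
  have N: "\<forall>T. T \<subseteq> Q \<longrightarrow> real (card {a\<in>A. T \<subseteq> P a}) = real (card A) * (\<Prod>q\<in>T. g q) + \<sigma> (\<Prod>T)"
  proof (intro allI impI)
    fix T assume TQ: "T \<subseteq> Q"
    have fT: "finite T" using fQ TQ finite_subset by blast
    have pT: "\<forall>q\<in>T. prime q" using prQ TQ by blast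
    have "real (card (Ar (\<Prod>T))) = real (card A) * (m (\<Prod>T) / real (\<Prod>T)) + \<sigma> (\<Prod>T)"
      using dens div[OF TQ] by blast
    moreover have "m (\<Prod>T) / real (\<Prod>T) = (\<Prod>q\<in>T. g q)"
      unfolding g_def using m_prod[OF mult fT pT] by (simp add: prod_dividef of_nat_prod)
    ultimately have "real (card (Ar (\<Prod>T))) = real (card A) * (\<Prod>q\<in>T. g q) + \<sigma> (\<Prod>T)"
      by (simp only:)
    then show "real (card {a\<in>A. T \<subseteq> P a}) = real (card A) * (\<Prod>q\<in>T. g q) + \<sigma> (\<Prod>T)"
      unfolding ArT[OF TQ] .
  qed
  have S_eq: "A - (\<Union>q\<in>Q. Ar q) = {a\<in>A. P a = {}}" unfolding P_def by blast
  have W_eq: "W_m m Q = (\<Prod>q\<in>Q. 1 - g q)" unfolding W_m_def g_def by simp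
  have W0: "(\<Prod>q\<in>Q. 1 - g q) \<ge> 0" using g01 by (intro prod_nonneg) auto
  have k1: "k \<ge> 1" unfolding k_def using fQ assms(4) by (simp add: Suc_le_eq card_gt_0_iff)
  have d1: "real d \<ge> 1" using assms(7) by simp
  show ?thesis
  proof (cases "k = 1")
    case True
    then have "card Q = 1" unfolding k_def .
    then obtain q where Qq: "Q = {q}" by (rule card_1_singletonE)
    have qd: "q \<in> divisors_set n" using div[of "{q}"] Qq by simp
    have ln2: "ln (ln 2) \<ge> - (1/2::real)"
    proof -
      have l2: "ln (2::real) \<ge> 2/3" by (rule ln2_ge)
      have "ln (inverse (ln 2)) \<le> inverse (ln (2::real)) - 1" by (rule ln_le_minus_one) (use l2 in simp)
      moreover have "inverse (ln (2::real)) \<le> 3/2" using l2 by (simp add: field_simps)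
      ultimately show ?thesis by (simp add: ln_inverse)
    qed
    have E1: "E \<ge> 1" unfolding E_def ll_def using True ln2 by (simp add: add_pos_nonneg)
    have "real d powr 1 \<le> real d powr E" by (rule powr_mono[OF E1 d1])
    then have dB: "real d \<le> B_bound Q d" using B_eq True d1 unfolding D_def by simp
    have cardS: "real (card (A - (\<Union>q\<in>Q. Ar q))) = cA * (1 - g q) - \<sigma> q"
    proof -
      have sub: "Ar q \<subseteq> A" using ArA qd by blast
      have "card (A - Ar q) = card A - card (Ar q)" using fA sub by (simp add: card_Diff_subset finite_subset)
      moreover have "card (Ar q) \<le> card A" using fA sub by (simp add: card_mono)
      ultimately have "real (card (A - Ar q)) = real (card A) - real (card (Ar q))" by simp
      moreover have "real (card (Ar q)) = real (card A) * (m q / real q) + \<sigma> q" using dens qd by blast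
      ultimately show ?thesis unfolding Qq cA_def g_def by (simp add: algebra_simps)
    qed
    have "\<bar>\<sigma> q\<bar> \<le> m q" using sig qd by blast
    moreover have "m q \<le> real d" using md Qq by blast
    ultimately have sq: "\<sigma> q \<le> real d" "- \<sigma> q \<le> real d" by linarith+
    define Z where "Z = cA * (1 - g q)"
    have Z0: "Z \<ge> 0" unfolding Z_def cA_def using g01 Qq by simp
    have WZ: "real (card A) * W_m m Q = Z" unfolding Z_def cA_def using W_eq Qq by simp
    have "(1/2) * real (card A) * W_m m Q = 1/2 * Z" "(3/2) * real (card A) * W_m m Q = 3/2 * Z"
      using WZ by (simp_all add: mult.assoc)
    moreover have "real (card (A - (\<Union>q\<in>Q. Ar q))) = Z - \<sigma> q" using cardS unfolding Z_def .
    ultimately show ?thesis using Z0 sq dB by linarith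
  next
    case False
    then have k2: "k \<ge> 2" using k1 by simp
    define Q2 where "Q2 = {q\<in>Q. 3 * d < q}"
    define H where "H = (\<Sum>q\<in>Q2. g q / (1 - g q))"
    define K0 where "K0 = nat \<lceil>5 * H / ln 4\<rceil>"
    define k1 where "k1 = card (Q - Q2)"
    define s where "s = (\<Sum>q\<in>Q. 1 / real q)"
    have Q2Q: "Q2 \<subseteq> Q" unfolding Q2_def by auto
    have fQ2: "finite Q2" using fQ Q2Q finite_subset by blast
    have PQ: "\<forall>a\<in>A. P a \<subseteq> Q" unfolding P_def by auto
    have l0: "ll \<ge> 0"
    proof -
      have "ln (real k + 1) \<ge> ln 3" using k2 by (subst ln_le_cancel_iff) auto
      then have "ln (real k + 1) \<ge> 1" using ln3_ge by linarith
      then show ?thesis unfolding ll_def by simp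
    qed
    have sb: "s \<le> 2 * ll + 9/2" unfolding s_def ll_def k_def
      by (rule recip_sum_bound[OF fQ prQ]) (use k2 k_def in simp)
    have H0: "H \<ge> 0" unfolding H_def
    proof (rule sum_nonneg)
      fix q assume "q \<in> Q2"
      then have "q \<in> Q" using Q2Q by blast
      then have "g q \<ge> 0" "1 - g q > 0" using g01 by auto
      then show "g q / (1 - g q) \<ge> 0" by simp
    qed
    have Hb: "H \<le> 3/2 * (real d * s)"
    proof -
      have "H \<le> (\<Sum>q\<in>Q2. 3/2 * real d * (1 / real q))"
        unfolding H_def
      proof (rule sum_mono)
        fix q assume q: "q \<in> Q2"
        then have qQ: "q \<in> Q" and q3: "3 * real d < real q" using Q2Q unfolding Q2_def by auto
        have mq0: "m q > 0" using mpos qpos[OF qQ] by blast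
        have mqd: "m q \<le> real d" using md qQ by blast
        have "(m q / real q) / (1 - m q / real q) \<le> 3/2 * real d * (1 / real q)"
          by (rule hb_point[OF mq0 mqd q3 d1])
        then have "g q / (1 - g q) \<le> 3/2 * real d * (1 / real q)" unfolding g_def .
        then show "g q / (1 - g q) \<le> 3/2 * real d * (1 / real q)" .
      qed
      also have "\<dots> \<le> (\<Sum>q\<in>Q. 3/2 * real d * (1 / real q))"
        by (rule sum_mono2[OF fQ Q2Q]) auto
      also have "\<dots> = 3/2 * (real d * s)" unfolding s_def by (simp add: sum_distrib_left)
      finally show ?thesis .
    qed
    have k1b: "real k1 \<le> 3 * real d"
    proof -
      have "Q - Q2 \<subseteq> {1..3*d}" unfolding Q2_def using qpos by (auto simp: Suc_le_eq)
      then have "k1 \<le> card {1..3*d}" unfolding k1_def by (intro card_mono) auto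
      then show ?thesis by simp
    qed
    have ln4: "ln (4::real) \<ge> 4/3"
    proof -
      have "ln (4::real) = ln 2 + ln 2" using ln_mult[of 2 2] by simp
      then show ?thesis using ln2_ge by simp
    qed
    have x0: "0 \<le> 5 * H / ln 4" using H0 ln4 by simp
    have K0eq: "real K0 = of_int \<lceil>5 * H / ln 4\<rceil>"
    proof -
      have "\<lceil>5 * H / ln 4\<rceil> \<ge> 0" using x0 by simp
      then show ?thesis unfolding K0_def by simp
    qed
    have K0a: "real K0 \<ge> 5 * H / ln 4" unfolding K0eq by (rule le_of_int_ceiling)
    have K0b: "real K0 \<le> 15/4 * H + 1"
    proof -
      have "5 * H / ln 4 \<le> 5 * H / (4/3)" using H0 ln4 by (intro divide_left_mono) auto
      moreover have "real K0 \<le> 5 * H / ln 4 + 1" unfolding K0eq by (rule of_int_ceiling_le_add_one)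
      ultimately show ?thesis by simp
    qed
    have condK: "5 * (\<Sum>q\<in>Q2. g q / (1 - g q)) + ln 2 \<le> real (Suc K) * ln 4" if "K \<ge> K0" for K
    proof -
      have "5 * H \<le> real K0 * ln 4" using K0a ln4 by (simp add: field_simps)
      moreover have "real K0 * ln 4 \<le> real K * ln 4" using that ln4 by (intro mult_right_mono) auto
      moreover have "ln (2::real) \<le> ln 4" by simp
      moreover have "real (Suc K) * ln 4 = real K * ln 4 + ln 4" by (simp add: algebra_simps)
      ultimately show ?thesis unfolding H_def[symmetric] by linarith
    qed
    have D2: "D \<ge> 2"
    proof -
      have "real d * real k \<ge> 1 * 2" using d1 k2 by (intro mult_mono) auto
      then show ?thesis unfolding D_def by simp
    qed
    have expo: "real (K0 + k1 + 2) \<le> E"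
      unfolding E_def by (rule final_numeric[OF d1 l0 sb H0 Hb k1b K0b])
    have errB: "\<bar>\<Sum>T\<in>Pow Q. wK Q2 K T * \<sigma> (\<Prod>T)\<bar> \<le> B_bound Q d" if "K \<le> Suc K0" for K
    proof -
      have "\<bar>\<Sum>T\<in>Pow Q. wK Q2 K T * \<sigma> (\<Prod>T)\<bar> \<le> (\<Sum>T\<in>Pow Q. \<bar>wK Q2 K T * \<sigma> (\<Prod>T)\<bar>)"
        by (rule sum_abs)
      also have "\<dots> \<le> (\<Sum>T\<in>Pow Q. if card T \<le> K + k1 \<and> card T \<noteq> 0 then real d ^ card T else 0)"
      proof (rule sum_mono)
        fix T assume "T \<in> Pow Q"
        then have TQ: "T \<subseteq> Q" by simp
        have fT: "finite T" using fQ TQ finite_subset by blast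
        show "\<bar>wK Q2 K T * \<sigma> (\<Prod>T)\<bar> \<le> (if card T \<le> K + k1 \<and> card T \<noteq> 0 then real d ^ card T else 0)"
        proof (cases "T = {}")
          case True then show ?thesis using sig1 by simp
        next
          case False
          show ?thesis
          proof (cases "card (T \<inter> Q2) \<le> K")
            case False then show ?thesis unfolding wK_def by simp
          next
            case True
            have "card T \<le> card (T \<inter> Q2) + card (T - Q2)"
            proof -
              have "T = (T \<inter> Q2) \<union> (T - Q2)" by auto
              then have "card T = card ((T \<inter> Q2) \<union> (T - Q2))" by simp
              also have "\<dots> \<le> card (T \<inter> Q2) + card (T - Q2)" by (rule card_Un_le)
              finally show ?thesis .
            qed
            moreover have "card (T - Q2) \<le> k1" unfolding k1_def using fQ TQ by (intro card_mono) auto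
            ultimately have cT: "card T \<le> K + k1" using True by simp
            have cT0: "card T \<noteq> 0" using False fT by simp
            have pT: "\<forall>q\<in>T. prime q" using prQ TQ by blast
            have "\<bar>\<sigma> (\<Prod>T)\<bar> \<le> m (\<Prod>T)" using sig div[OF TQ] by blast
            also have "\<dots> = (\<Prod>q\<in>T. m q)" by (rule m_prod[OF mult fT pT])
            also have "\<dots> \<le> (\<Prod>q\<in>T. real d)"
            proof (rule prod_mono)
              fix q assume "q \<in> T"
              then have "q \<in> Q" using TQ by auto
              then show "0 \<le> m q \<and> m q \<le> real d" using md mpos[OF qpos] by (simp add: less_imp_le)
            qed
            also have "\<dots> = real d ^ card T" by simp
            finally have "\<bar>\<sigma> (\<Prod>T)\<bar> \<le> real d ^ card T" .
            moreover have "\<bar>wK Q2 K T\<bar> = 1" unfolding wK_def using True by simp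
            ultimately show ?thesis using cT cT0 by (simp add: abs_mult)
          qed
        qed
      qed
      also have "\<dots> \<le> (real d * real (card Q)) ^ Suc (K + k1)"
        by (rule subsets_pow_bound[OF fQ]) (use D2 in \<open>simp add: D_def k_def\<close>)
      also have "\<dots> = D ^ Suc (K + k1)" unfolding D_def k_def by simp
      also have "\<dots> \<le> D ^ (K0 + k1 + 2)" using D2 that by (intro power_increasing) auto
      also have "\<dots> = D powr real (K0 + k1 + 2)" by (rule powr_realpow[symmetric]) (use D2 in simp)
      also have "\<dots> \<le> D powr E" using D2 expo by (intro powr_mono) auto
      finally show ?thesis using B_eq by simp
    qed
    have SB: "(even K \<longrightarrow> real (card {a\<in>A. P a = {}}) \<le> 3/2 * real (card A) * (\<Prod>q\<in>Q. 1 - g q) + \<bar>\<Sum>T\<in>Pow Q. wK Q2 K T * \<sigma> (\<Prod>T)\<bar>)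
       \<and> (odd K \<longrightarrow> 1/2 * real (card A) * (\<Prod>q\<in>Q. 1 - g q) - \<bar>\<Sum>T\<in>Pow Q. wK Q2 K T * \<sigma> (\<Prod>T)\<bar> \<le> real (card {a\<in>A. P a = {}}))"
      if "K \<ge> K0" for K
      by (rule sieve_bounds[OF fA fQ Q2Q PQ g01 N condK[OF that]])
    have up: "real (card {a\<in>A. P a = {}}) \<le> 3/2 * real (card A) * (\<Prod>q\<in>Q. 1 - g q) + B_bound Q d"
    proof -
      obtain K where K: "K \<ge> K0" "K \<le> Suc K0" "even K"
      proof (cases "even K0")
        case True then show ?thesis using that[of K0] by simp
      next
        case False then show ?thesis using that[of "Suc K0"] by simp
      qed
      have "real (card {a\<in>A. P a = {}}) \<le> 3/2 * real (card A) * (\<Prod>q\<in>Q. 1 - g q) + \<bar>\<Sum>T\<in>Pow Q. wK Q2 K T * \<sigma> (\<Prod>T)\<bar>"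
        using SB[OF K(1)] K(3) by blast
      moreover have "\<bar>\<Sum>T\<in>Pow Q. wK Q2 K T * \<sigma> (\<Prod>T)\<bar> \<le> B_bound Q d" by (rule errB[OF K(2)])
      ultimately show ?thesis by linarith
    qed
    have lo: "1/2 * real (card A) * (\<Prod>q\<in>Q. 1 - g q) - B_bound Q d \<le> real (card {a\<in>A. P a = {}})"
    proof -
      obtain K where K: "K \<ge> K0" "K \<le> Suc K0" "odd K"
      proof (cases "odd K0")
        case True then show ?thesis using that[of K0] by simp
      next
        case False then show ?thesis using that[of "Suc K0"] by simp
      qed
      have "1/2 * real (card A) * (\<Prod>q\<in>Q. 1 - g q) - \<bar>\<Sum>T\<in>Pow Q. wK Q2 K T * \<sigma> (\<Prod>T)\<bar> \<le> real (card {a\<in>A. P a = {}})"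
        using SB[OF K(1)] K(3) by blast
      moreover have "\<bar>\<Sum>T\<in>Pow Q. wK Q2 K T * \<sigma> (\<Prod>T)\<bar> \<le> B_bound Q d" by (rule errB[OF K(2)])
      ultimately show ?thesis by linarith
    qed
    show ?thesis using up lo unfolding S_eq W_eq by simp
  qed
qed

end
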